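(* Let $n\in\mathbb{N}\cup\{\infty\}$ and let $\{J(t)\}_{t\ge0}$ be a stochastic process on the (possibly infinite) countable state space $\{1,2,\dots,n\}$. Suppose its distribution $\mathbf{r}(t)=(\mathbf{r}_i(t))_{i=1}^n=(\mathbb{P}(J(t)=i))_{i=1}^n\in\mathbb{R}^n$ satisfies $$\frac{d}{dt}\mathbf{r}(t)=R(t)\mathbf{r}(t),\quad t>0,$$ for some function $R(t):[0,\infty)\to\mathbb{R}^{n\times n}$, and $\mathbf{r}(t)=\Psi(t)\mathbf{r}(0)$ for $t\ge0$, where $\Psi(t):(-\infty,\infty)\to\mathbb{R}^{n\times n}$ satisfies $\Psi(t)\Psi(-t)=\mathrm{id}$ (the identity operator) for all $t\in(-\infty,\infty)$. Let $\{X(t)\}_{t\ge0}$ be a stochastic process taking values in the closure of an open set $V\subseteq\mathbb{R}^d$, whose probability density $q(x,t)\,dx=\mathbb{P}(X(t)=x)$ satisfies $$\frac{\partial}{\partial t}q=\mathcal{D}_t\mathcal{L}_x q,\quad x\in V,\ t>0,$$ where $\mathcal{L}_x$ is a linear operator acting only on functions of space $x\in V$ and $\mathcal{D}_t$ is a linear operator acting only on functions of time $t\in[0,\infty)$, in the sense that for real-valued functions $\varphi(t),\psi(t)$ in the domain of $\mathcal{D}_t$ and $f(x),g(x)$ in the domain of $\mathcal{L}_x$, $$\mathcal{L}_x(\varphi f+\psi g)=\varphi\,\mathcal{L}_x f+\psi\,\mathcal{L}_x g,\qquad \mathcal{D}_t(\varphi f+\psi g)=f\,\mathcal{D}_t\varphi+g\,\mathcal{D}_t\psi.$$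 If $X$ and $J$ are independent, then the joint probability density $\mathbf{p}(x,t)=(\mathbf{p}_i(x,t))_{i=1}^n$, defined by $\mathbf{p}_i(x,t)\,dx=\mathbb{P}(X(t)=x,\,J(t)=i)$, satisfies $$\frac{\partial}{\partial t}\mathbf{p}=\Psi(t)\,\mathcal{D}_t\Big[\Psi(-t)\,\mathcal{L}_x\mathbf{p}\Big]+R(t)\,\mathbf{p},\quad x\in V,\ t>0.$$
   Context: Motivating example: for subdiffusion one takes $\mathcal{D}_t={}_{0}D_{t}^{1-\alpha}$, the Riemann-Liouville fractional derivative ${}_{0}D_{t}^{1-\alpha}f(t)=\frac{1}{\Gamma(\alpha)}\frac{d}{dt}\int_0^t\frac{f(s)}{(t-s)^{1-\alpha}}\,ds$ with $\alpha\in(0,1)$, and $\mathcal{L}_x$ a (forward) Fokker-Planck operator such as $K_\alpha\frac{\partial^2}{\partial x^2}$; with constant $R$ and finite $n$, $\Psi(t)=e^{Rt}$ (matrix exponential). *)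

theory Defs
  imports "HOL-Probability.Probability"
begin

definition mat_vec :: "('j \<Rightarrow> 'j \<Rightarrow> real) \<Rightarrow> ('j \<Rightarrow> real) \<Rightarrow> 'j \<Rightarrow> real" where
  "mat_vec A v = (\<lambda>i. infsum (\<lambda>j. A i j * v j) UNIV)"

text \<open>Pointwise density: c is the density at x of the (sub-probability) law of Y
  restricted to the event E, i.e.  c dx = P(E, Y = x), read as the limit of
  P(E, Y in ball x eps) / vol(ball x eps) as eps tends to 0.\<close>
definition density_at ::
  "'w measure \<Rightarrow> ('w \<Rightarrow> bool) \<Rightarrow> ('w \<Rightarrow> 'a::euclidean_space) \<Rightarrow> 'a \<Rightarrow> real \<Rightarrow> bool" where
  "density_at M E Y x c \<longleftrightarrow>
     ((\<lambda>\<epsilon>. measure M {\<omega> \<in> space M. E \<omega> \<and> Y \<omega> \<in> ball x \<epsilon>} / measure lborel (ball x \<epsilon>))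
        \<longlongrightarrow> c) (at_right 0)"

end

theory Submission
  imports Defs
begin

theorem theorem1:
  fixes M :: "'w measure"
    and J :: "real \<Rightarrow> 'w \<Rightarrow> 'j::countable"
    and X :: "real \<Rightarrow> 'w \<Rightarrow> 'a::euclidean_space"
    and r :: "real \<Rightarrow> 'j \<Rightarrow> real"
    and R :: "real \<Rightarrow> 'j \<Rightarrow> 'j \<Rightarrow> real"
    and \<Psi> :: "real \<Rightarrow> 'j \<Rightarrow> 'j \<Rightarrow> real"
    and V :: "'a set"
    and q :: "'a \<Rightarrow> real \<Rightarrow> real"
    and p :: "'j \<Rightarrow> 'a \<Rightarrow> real \<Rightarrow> real"
    and L :: "('a \<Rightarrow> real) \<Rightarrow> ('a \<Rightarrow> real)"
    and D :: "(real \<Rightarrow> real) \<Rightarrow> (real \<Rightarrow> real)"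
  assumes M: "prob_space M"
    and J_rv: "\<forall>t\<ge>0. J t \<in> measurable M (count_space UNIV)"
    and X_rv: "\<forall>t\<ge>0. X t \<in> borel_measurable M"
    and r_def: "\<forall>t\<ge>0. \<forall>i. r t i = measure M {\<omega> \<in> space M. J t \<omega> = i}"
    and r_ode: "\<forall>t>0. \<forall>i. ((\<lambda>s. r s i) has_real_derivative mat_vec (R t) (r t) i) (at t)"
    and r_Psi: "\<forall>t\<ge>0. r t = mat_vec (\<Psi> t) (r 0)"
    and Psi_inv: "\<forall>t. \<forall>v. v summable_on UNIV \<longrightarrow> mat_vec (\<Psi> t) (mat_vec (\<Psi> (- t)) v) = v"
    and V_open: "open V"
    and X_range: "\<forall>t\<ge>0. \<forall>\<omega>\<in>space M. X t \<omega> \<in> closure V"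
    and q_dens: "\<forall>t\<ge>0. \<forall>x\<in>V. density_at M (\<lambda>\<omega>. True) (X t) x (q x t)"
    and q_pde: "\<forall>t>0. \<forall>x\<in>V.
                  ((\<lambda>s. q x s) has_real_derivative D (\<lambda>s. L (\<lambda>y. q y s) x) t) (at t)"
    and L_lin: "\<forall>f g a b. L (\<lambda>y. a * f y + b * g y) = (\<lambda>y. a * L f y + b * L g y)"
    and L_local: "\<forall>f g. (\<forall>y\<in>V. f y = g y) \<longrightarrow> (\<forall>y\<in>V. L f y = L g y)"
    and D_lin: "\<forall>\<phi> \<psi> a b. D (\<lambda>s. \<phi> s * a + \<psi> s * b) = (\<lambda>s. a * D \<phi> s + b * D \<psi> s)"
    and D_local: "\<forall>\<phi> \<psi>. (\<forall>s\<ge>0. \<phi> s = \<psi> s) \<longrightarrow> (\<forall>s\<ge>0. D \<phi> s = D \<psi> s)"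
    and indep: "prob_space.indep_set M
                  {(\<lambda>\<omega>. \<lambda>t\<in>{0..}. X t \<omega>) -` S \<inter> space M | S.
                     S \<in> sets (Pi\<^sub>M {0..} (\<lambda>_. borel))}
                  {(\<lambda>\<omega>. \<lambda>t\<in>{0..}. J t \<omega>) -` S \<inter> space M | S.
                     S \<in> sets (Pi\<^sub>M {0..} (\<lambda>_. count_space UNIV))}"
    and p_dens: "\<forall>t\<ge>0. \<forall>x\<in>V. \<forall>i. density_at M (\<lambda>\<omega>. J t \<omega> = i) (X t) x (p i x t)"
  shows "\<forall>t>0. \<forall>x\<in>V. \<forall>i.
           ((\<lambda>s. p i x s) has_real_derivative
              (mat_vec (\<Psi> t)
                 (\<lambda>k. D (\<lambda>s. mat_vec (\<Psi> (- s)) (\<lambda>j. L (\<lambda>y. p j y s) x) k) t) i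
               + mat_vec (R t) (\<lambda>j. p j x t) i)) (at t)"
proof -
  interpret P: prob_space M by (rule M)
  have fact1: "p i x t = r t i * q x t" if t: "t \<ge> 0" and x: "x \<in> V" for t x i
  proof -
    have eq: "measure M {\<omega> \<in> space M. J t \<omega> = i \<and> X t \<omega> \<in> ball x e}
        = r t i * measure M {\<omega> \<in> space M. True \<and> X t \<omega> \<in> ball x e}" for e
    proof -
      define SX where "SX = (\<lambda>f. f t) -` ball x e \<inter> space (Pi\<^sub>M {0..} (\<lambda>_. borel::'a measure))"
      define SJ where "SJ = (\<lambda>f. f t) -` {i} \<inter> space (Pi\<^sub>M {0..} (\<lambda>_. count_space (UNIV::'j set)))"
      have SX: "SX \<in> sets (Pi\<^sub>M {0..} (\<lambda>_. borel))"
        unfolding SX_def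
        by (rule measurable_sets[OF measurable_component_singleton]) (use t in auto)
      have SJ: "SJ \<in> sets (Pi\<^sub>M {0..} (\<lambda>_. count_space UNIV))"
        unfolding SJ_def
        by (rule measurable_sets[OF measurable_component_singleton]) (use t in auto)
      have a: "(\<lambda>\<omega>. \<lambda>t\<in>{0..}. X t \<omega>) -` SX \<inter> space M = {\<omega> \<in> space M. X t \<omega> \<in> ball x e}"
        unfolding SX_def using t by (auto simp: space_PiM)
      have b: "(\<lambda>\<omega>. \<lambda>t\<in>{0..}. J t \<omega>) -` SJ \<inter> space M = {\<omega> \<in> space M. J t \<omega> = i}"
        unfolding SJ_def using t by (auto simp: space_PiM)
      have "P.prob ({\<omega> \<in> space M. X t \<omega> \<in> ball x e} \<inter> {\<omega> \<in> space M. J t \<omega> = i})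
          = P.prob {\<omega> \<in> space M. X t \<omega> \<in> ball x e} * P.prob {\<omega> \<in> space M. J t \<omega> = i}"
      proof (rule P.indep_setD[OF indep])
        show "{\<omega> \<in> space M. X t \<omega> \<in> ball x e} \<in> {(\<lambda>\<omega>. \<lambda>t\<in>{0..}. X t \<omega>) -` S \<inter> space M | S.
                     S \<in> sets (Pi\<^sub>M {0..} (\<lambda>_. borel))}"
          unfolding a[symmetric] using SX by blast
        show "{\<omega> \<in> space M. J t \<omega> = i} \<in> {(\<lambda>\<omega>. \<lambda>t\<in>{0..}. J t \<omega>) -` S \<inter> space M | S.
                     S \<in> sets (Pi\<^sub>M {0..} (\<lambda>_. count_space UNIV))}"
          unfolding b[symmetric] using SJ by blast
      qed
      moreover have "{\<omega> \<in> space M. X t \<omega> \<in> ball x e} \<inter> {\<omega> \<in> space M. J t \<omega> = i}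
          = {\<omega> \<in> space M. J t \<omega> = i \<and> X t \<omega> \<in> ball x e}" by auto
      ultimately show ?thesis using r_def t by simp
    qed
    have l1: "((\<lambda>\<epsilon>. measure M {\<omega> \<in> space M. J t \<omega> = i \<and> X t \<omega> \<in> ball x \<epsilon>} / measure lborel (ball x \<epsilon>)) \<longlongrightarrow> p i x t) (at_right 0)"
      using p_dens t x unfolding density_at_def by blast
    have "((\<lambda>\<epsilon>. measure M {\<omega> \<in> space M. True \<and> X t \<omega> \<in> ball x \<epsilon>} / measure lborel (ball x \<epsilon>)) \<longlongrightarrow> q x t) (at_right 0)"
      using q_dens t x unfolding density_at_def by blast
    then have "((\<lambda>\<epsilon>. r t i * (measure M {\<omega> \<in> space M. True \<and> X t \<omega> \<in> ball x \<epsilon>} / measure lborel (ball x \<epsilon>))) \<longlongrightarrow> r t i * q x t) (at_right 0)"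
      by (intro tendsto_mult tendsto_const)
    then have l2: "((\<lambda>\<epsilon>. measure M {\<omega> \<in> space M. J t \<omega> = i \<and> X t \<omega> \<in> ball x \<epsilon>} / measure lborel (ball x \<epsilon>)) \<longlongrightarrow> r t i * q x t) (at_right 0)"
      unfolding eq by simp
    show ?thesis using tendsto_unique[OF trivial_limit_at_right_real l1 l2] .
  qed
  have r0_summ: "r 0 summable_on UNIV"
  proof (rule nonneg_bdd_above_summable_on)
    show "\<And>j. j \<in> UNIV \<Longrightarrow> r 0 j \<ge> 0" using r_def by simp
    show "bdd_above (sum (r 0) ` {F. F \<subseteq> UNIV \<and> finite F})"
    proof (rule bdd_aboveI)
      fix y assume "y \<in> sum (r 0) ` {F. F \<subseteq> UNIV \<and> finite F}"
      then obtain F where F: "finite F" and y: "y = sum (r 0) F" by auto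
      have ev: "{\<omega> \<in> space M. J 0 \<omega> = j} \<in> P.events" for j
        using J_rv by (auto intro: measurable_sets_Collect)
      have "y = (\<Sum>j\<in>F. P.prob {\<omega> \<in> space M. J 0 \<omega> = j})" using y r_def by simp
      also have "\<dots> = P.prob (\<Union>j\<in>F. {\<omega> \<in> space M. J 0 \<omega> = j})"
        by (rule P.finite_measure_finite_Union[symmetric]) (use F ev in \<open>auto simp: disjoint_family_on_def\<close>)
      also have "\<dots> \<le> 1" by (rule P.prob_le_1)
      finally show "y \<le> 1" .
    qed
  qed
  have Psi_r: "mat_vec (\<Psi> (- s)) (r s) = r 0" if "s \<ge> 0" for s
  proof -
    have "mat_vec (\<Psi> (- s)) (r s) = mat_vec (\<Psi> (- s)) (mat_vec (\<Psi> (- (- s))) (r 0))"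
      by (subst r_Psi[rule_format, OF that]) simp
    also have "\<dots> = r 0" by (rule Psi_inv[rule_format, OF r0_summ])
    finally show ?thesis .
  qed
  show ?thesis
  proof (intro allI impI ballI)
    fix t :: real and x i assume t: "t > 0" and x: "x \<in> V"
    define Lq where "Lq = (\<lambda>s. L (\<lambda>y. q y s) x)"
    have Lp: "L (\<lambda>y. p j y s) x = r s j * Lq s" if s: "s \<ge> 0" for j s
    proof -
      have "\<forall>y\<in>V. L (\<lambda>y. p j y s) y = L (\<lambda>y. r s j * q y s + 0 * q y s) y"
        using spec[OF spec[OF L_local, of "\<lambda>y. p j y s"], of "\<lambda>y. r s j * q y s + 0 * q y s"]
          fact1 s by simp
      then have "L (\<lambda>y. p j y s) x = L (\<lambda>y. r s j * q y s + 0 * q y s) x"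
        using x by blast
      also have "\<dots> = (\<lambda>y. r s j * L (\<lambda>y. q y s) y + 0 * L (\<lambda>y. q y s) y) x"
        by (simp only: L_lin[rule_format, of "r s j" "\<lambda>y. q y s" 0 "\<lambda>y. q y s"])
      also have "\<dots> = r s j * Lq s" unfolding Lq_def by simp
      finally show ?thesis .
    qed
    have inner: "mat_vec (\<Psi> (- s)) (\<lambda>j. L (\<lambda>y. p j y s) x) k = Lq s * r 0 k" if s: "s \<ge> 0" for s k
    proof -
      have "mat_vec (\<Psi> (- s)) (\<lambda>j. L (\<lambda>y. p j y s) x) k = infsum (\<lambda>j. (\<Psi> (- s) k j * r s j) * Lq s) UNIV"
        unfolding mat_vec_def using Lp[OF s] by (simp add: mult.assoc)
      also have "\<dots> = mat_vec (\<Psi> (- s)) (r s) k * Lq s"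
        unfolding mat_vec_def by (rule infsum_cmult_left')
      finally show ?thesis using Psi_r[OF s] by simp
    qed
    have Dk: "D (\<lambda>s. mat_vec (\<Psi> (- s)) (\<lambda>j. L (\<lambda>y. p j y s) x) k) t = r 0 k * D Lq t" for k
    proof -
      have "D (\<lambda>s. mat_vec (\<Psi> (- s)) (\<lambda>j. L (\<lambda>y. p j y s) x) k) t
          = D (\<lambda>s. Lq s * r 0 k + Lq s * 0) t"
      proof -
        have "\<forall>s'\<ge>0. D (\<lambda>s. mat_vec (\<Psi> (- s)) (\<lambda>j. L (\<lambda>y. p j y s) x) k) s'
            = D (\<lambda>s. Lq s * r 0 k + Lq s * 0) s'"
          using spec[OF spec[OF D_local, of "\<lambda>s. mat_vec (\<Psi> (- s)) (\<lambda>j. L (\<lambda>y. p j y s) x) k"],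
              of "\<lambda>s. Lq s * r 0 k + Lq s * 0"] inner by simp
        then show ?thesis using t by simp
      qed
      also have "\<dots> = (\<lambda>s. r 0 k * D Lq s + 0 * D Lq s) t"
        by (simp only: D_lin[rule_format, of Lq "r 0 k" Lq 0])
      also have "\<dots> = r 0 k * D Lq t" by simp
      finally show ?thesis .
    qed
    have first: "mat_vec (\<Psi> t) (\<lambda>k. D (\<lambda>s. mat_vec (\<Psi> (- s)) (\<lambda>j. L (\<lambda>y. p j y s) x) k) t) i
        = r t i * D Lq t"
    proof -
      have "mat_vec (\<Psi> t) (\<lambda>k. D (\<lambda>s. mat_vec (\<Psi> (- s)) (\<lambda>j. L (\<lambda>y. p j y s) x) k) t) i
          = infsum (\<lambda>k. (\<Psi> t i k * r 0 k) * D Lq t) UNIV"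
        unfolding Dk unfolding mat_vec_def by (simp add: mult.assoc)
      also have "\<dots> = mat_vec (\<Psi> t) (r 0) i * D Lq t"
        unfolding mat_vec_def by (rule infsum_cmult_left')
      finally show ?thesis using r_Psi[rule_format, of t] t by simp
    qed
    have second: "mat_vec (R t) (\<lambda>j. p j x t) i = mat_vec (R t) (r t) i * q x t"
    proof -
      have "mat_vec (R t) (\<lambda>j. p j x t) i = infsum (\<lambda>j. (R t i j * r t j) * q x t) UNIV"
        unfolding mat_vec_def using fact1 t x by (simp add: mult.assoc)
      also have "\<dots> = mat_vec (R t) (r t) i * q x t"
        unfolding mat_vec_def by (rule infsum_cmult_left')
      finally show ?thesis .
    qed
    have d: "((\<lambda>s. r s i * q x s) has_real_derivative
        (mat_vec (R t) (r t) i * q x t + r t i * D Lq t)) (at t)"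
      using DERIV_mult[OF r_ode[rule_format, OF t, of i] q_pde[rule_format, OF t x]]
      unfolding Lq_def by (simp add: mult.commute)
    have d2: "((\<lambda>s. p i x s) has_real_derivative
        (mat_vec (R t) (r t) i * q x t + r t i * D Lq t)) (at t)"
      by (rule has_field_derivative_transform_within_open[OF d, of "{0<..}"])
         (use t fact1 x in auto)
    show "((\<lambda>s. p i x s) has_real_derivative
              (mat_vec (\<Psi> t)
                 (\<lambda>k. D (\<lambda>s. mat_vec (\<Psi> (- s)) (\<lambda>j. L (\<lambda>y. p j y s) x) k) t) i
               + mat_vec (R t) (\<lambda>j. p j x t) i)) (at t)"
      unfolding first second using d2 by (simp add: add.commute)
  qed
qed

end
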